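(* Let $\mathsf{S} \subseteq \{0,1\}^n$ be arbitrary and $f: \mathsf{S} \rightarrow \{0,1\}$ a partial Boolean function. Let $b \geq 2$ and $\mathsf{IP} : \{0, 1\}^b \times \{0, 1\}^b \to \{0, 1\}$ the Inner Product function. Then $\mathsf{D}_{\mathrm{cc}}^\rightarrow(f \circ \mathsf{IP})=\Omega(b \cdot \mathsf{D}_{\mathrm{dt}}^\rightarrow(f))$, where the implied constant is absolute.
   Context: $\mathsf{IP}(x_1,\dots,x_b,y_1,\dots,y_b)=\oplus_{i\in[b]}(x_i\wedge y_i)$. The composed (partial) function $f\circ\mathsf{IP}$ has Alice holding $x=(x_1,\dots,x_n)$, Bob holding $y=(y_1,\dots,y_n)$, $x_i,y_i\in\{0,1\}^b$, is defined on those $(x,y)$ with $(\mathsf{IP}(x_1,y_1),\dots,\mathsf{IP}(x_n,y_n))\in\mathsf{S}$, and takes value $f(\mathsf{IP}(x_1,y_1),\dots,\mathsf{IP}(x_n,y_n))$. $\mathsf{D}_{\mathrm{cc}}^\rightarrow(F)$ is the deterministic one-way communication complexity: the minimum, over protocols in which Alice sends a message $m(x)$ and Bob outputs a bit depending on $m(x)$ and $y$ that is correct on all inputs in the domain, of the maximum message length. $\mathsf{D}_{\mathrm{dt}}^\rightarrow(f)$ (non-adaptive decision tree complexity) is the minimum $k$ such that there exist indices $i_1,\dots,i_k\in[n]$ for which, for every assignment $a_{i_1},\dots,a_{i_k}$, $f$ is constant on $\mathsf{S}\cap\{x: x_{i_j}=a_{i_j}\ \forall j\}$. *)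

theory Defs
  imports Complex_Main
begin

definition ip :: "bool list \<Rightarrow> bool list \<Rightarrow> bool" where
  "ip u v = odd (length (filter id (map2 (\<and>) u v)))"

definition blocks :: "nat \<Rightarrow> nat \<Rightarrow> bool list list set" where
  "blocks n b = {x. length x = n \<and> (\<forall>u\<in>set x. length u = b)}"

definition comp_dom :: "nat \<Rightarrow> nat \<Rightarrow> bool list set \<Rightarrow> (bool list list \<times> bool list list) set" where
  "comp_dom n b S = {(x, y). x \<in> blocks n b \<and> y \<in> blocks n b \<and> map2 ip x y \<in> S}"

definition oneway_protocol :: "nat \<Rightarrow> nat \<Rightarrow> bool list set \<Rightarrow> (bool list \<Rightarrow> bool) \<Rightarrow> nat \<Rightarrow> bool" where
  "oneway_protocol n b S f k \<longleftrightarrow>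
     (\<exists>(m :: bool list list \<Rightarrow> bool list) (g :: bool list \<Rightarrow> bool list list \<Rightarrow> bool).
        (\<forall>x\<in>blocks n b. length (m x) \<le> k) \<and>
        (\<forall>(x, y)\<in>comp_dom n b S. g (m x) y = f (map2 ip x y)))"

definition D_cc_oneway :: "nat \<Rightarrow> nat \<Rightarrow> bool list set \<Rightarrow> (bool list \<Rightarrow> bool) \<Rightarrow> nat" where
  "D_cc_oneway n b S f = (LEAST k. oneway_protocol n b S f k)"

definition nonadaptive_dt :: "nat \<Rightarrow> bool list set \<Rightarrow> (bool list \<Rightarrow> bool) \<Rightarrow> nat \<Rightarrow> bool" where
  "nonadaptive_dt n S f k \<longleftrightarrow>
     (\<exists>I :: nat list. length I = k \<and> (\<forall>i\<in>set I. i < n) \<and>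
        (\<forall>a :: nat \<Rightarrow> bool. \<exists>c. \<forall>x\<in>S. (\<forall>i\<in>set I. x ! i = a i) \<longrightarrow> f x = c))"

definition D_dt_nonadaptive :: "nat \<Rightarrow> bool list set \<Rightarrow> (bool list \<Rightarrow> bool) \<Rightarrow> nat" where
  "D_dt_nonadaptive n S f = (LEAST k. nonadaptive_dt n S f k)"

end

theory Submission
  imports Defs "HOL-Library.FuncSet"
begin
fun reachL :: "int \<Rightarrow> bool list \<Rightarrow> bool" where
  "reachL s [] = (s \<le> 0)"
| "reachL s (x#xs) = (s \<le> 0 \<or> reachL (if x then s - 1 else s + 1) xs)"

lemma reachL_nonpos: "s \<le> 0 \<Longrightarrow> reachL s xs"
  by (cases xs) auto

lemma lists_Suc_split:
  "{xs. length xs = Suc n \<and> P xs} =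
   Cons True ` {xs. length xs = n \<and> P (True#xs)} \<union> Cons False ` {xs. length xs = n \<and> P (False#xs)}"
  (is "?L = ?R")
proof
  show "?L \<subseteq> ?R"
  proof
    fix xs assume "xs \<in> ?L"
    then obtain y ys where xs: "xs = y # ys" "length ys = n" "P (y#ys)"
      by (cases xs) auto
    then show "xs \<in> ?R" by (cases y) auto
  qed
qed auto

lemma fin_lists_len: "finite {xs::bool list. length xs = n \<and> P xs}"
proof -
  have "{xs::bool list. length xs = n \<and> P xs} \<subseteq> {xs. set xs \<subseteq> UNIV \<and> length xs = n}" by auto
  moreover have "finite {xs::bool list. set xs \<subseteq> UNIV \<and> length xs = n}"
    by (rule finite_lists_length_eq) auto
  ultimately show ?thesis by (rule finite_subset)
qed

lemma sum_lists_Suc: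
  fixes g :: "bool list \<Rightarrow> nat"
  shows "(\<Sum>xs\<in>{xs. length xs = Suc n \<and> P xs}. g xs) =
    (\<Sum>xs\<in>{xs. length xs = n \<and> P (True#xs)}. g (True#xs)) +
    (\<Sum>xs\<in>{xs. length xs = n \<and> P (False#xs)}. g (False#xs))"
proof -
  have "(\<Sum>xs\<in>{xs. length xs = Suc n \<and> P xs}. g xs) =
     (\<Sum>xs\<in>Cons True ` {xs. length xs = n \<and> P (True#xs)}. g xs) +
     (\<Sum>xs\<in>Cons False ` {xs. length xs = n \<and> P (False#xs)}. g xs)"
    unfolding lists_Suc_split
    by (rule sum.union_disjoint) (auto intro: fin_lists_len)
  also have "\<dots> = (\<Sum>xs\<in>{xs. length xs = n \<and> P (True#xs)}. g (True#xs)) +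
    (\<Sum>xs\<in>{xs. length xs = n \<and> P (False#xs)}. g (False#xs))"
    by (subst sum.reindex, simp add: inj_on_def, subst sum.reindex, simp add: inj_on_def, simp)
  finally show ?thesis .
qed

lemma aux_alg: "((a::nat) + r*b) * (r * e) = r*(a*e) + b*(r*(r*e))"
  by (simp add: algebra_simps)

lemma walk_bound:
  fixes q :: nat
  assumes q: "1 \<le> q"
  shows "(\<Sum>xs\<in>{xs. length xs = n \<and> reachL s xs}. (q-1)^(length (filter Not xs))) * (q-1)^(nat s) \<le> q^n"
proof (induction n arbitrary: s)
  case 0
  show ?case
  proof (cases "s \<le> 0")
    case True
    then have "{xs::bool list. length xs = 0 \<and> reachL s xs} = {[]}" by auto
    then show ?thesis using True by simp
  next
    case False
    then have e: "{xs::bool list. length xs = 0 \<and> reachL s xs} = {}" by auto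
    show ?thesis unfolding e by simp
  qed
next
  case (Suc n)
  define T where "T s = (\<Sum>xs\<in>{xs. length xs = n \<and> reachL s xs}. (q-1)^(length (filter Not xs)))" for s
  have IH: "T s * (q-1)^(nat s) \<le> q^n" for s using Suc.IH unfolding T_def by blast
  have split: "(\<Sum>xs\<in>{xs. length xs = Suc n \<and> reachL s xs}. (q-1)^(length (filter Not xs))) =
     T (s - 1) + (q-1) * T (s + 1)" if "s > 0"
    using that unfolding T_def
    by (subst sum_lists_Suc) (simp add: sum_distrib_left)
  show ?case
  proof (cases "s \<le> 0")
    case True
    have "(\<Sum>xs\<in>{xs. length xs = Suc n \<and> reachL s xs}. (q-1)^(length (filter Not xs))) =
       T 0 + (q-1) * T 0"
      using True unfolding T_def
      by (subst sum_lists_Suc) (simp add: sum_distrib_left reachL_nonpos)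
    also have "\<dots> = q * T 0" using q by (cases q) auto
    also have "\<dots> \<le> q * q^n" using IH[of 0] by simp
    finally show ?thesis using True by simp
  next
    case False
    have "nat s = Suc (nat (s-1))" using False by simp
    then have e1: "(q-1)^(nat s) = (q-1) * (q-1)^(nat (s-1))" by simp
    have e2: "(q-1)^(nat (s+1)) = (q-1) * (q-1)^(nat s)" using False
      by (simp add: nat_add_distrib)
    have "(T (s - 1) + (q-1) * T (s + 1)) * (q-1)^(nat s) =
        (q-1) * (T (s-1) * (q-1)^(nat (s-1))) + T (s+1) * (q-1)^(nat (s+1))"
      unfolding e2 e1 by (rule aux_alg)
    also have "\<dots> \<le> (q-1) * q^n + q^n"
      using IH[of "s-1"] IH[of "s+1"] by (intro add_mono mult_left_mono) auto
    also have "\<dots> = q^Suc n" using q by (cases q) auto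
    finally show ?thesis using split False by simp
  qed
qed

definition tint :: "nat \<Rightarrow> nat set set \<Rightarrow> bool" where
  "tint t F \<longleftrightarrow> (\<forall>A\<in>F. \<forall>B\<in>F. t \<le> card (A \<inter> B))"

definition Wt :: "nat \<Rightarrow> nat \<Rightarrow> nat set set \<Rightarrow> nat" where
  "Wt q n F = (\<Sum>Z\<in>F. (q-1)^(n - card Z))"

definition Phi :: "nat set set \<Rightarrow> nat" where
  "Phi F = (\<Sum>Z\<in>F. \<Sum>Z)"

definition shz :: "nat \<Rightarrow> nat \<Rightarrow> nat set set \<Rightarrow> nat set \<Rightarrow> nat set" where
  "shz i j F Z = (if j \<in> Z \<and> i \<notin> Z \<and> insert i (Z - {j}) \<notin> F then insert i (Z - {j}) else Z)"

lemma card_split2: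
  assumes "finite X" "i \<noteq> j"
  shows "card (X \<inter> Y) = card ((X - {i,j}) \<inter> (Y - {i,j})) + (if i \<in> X \<and> i \<in> Y then 1 else 0)
     + (if j \<in> X \<and> j \<in> Y then 1 else 0)"
proof -
  have fin: "finite (X \<inter> Y)" using assms by auto
  have e: "(X \<inter> Y) - {i,j} = (X - {i,j}) \<inter> (Y - {i,j})" by auto
  have "card (X \<inter> Y) = card ((X - {i,j}) \<inter> (Y - {i,j})) + card (X \<inter> Y \<inter> {i,j})"
    using card_Int_Diff[OF fin, of "{i,j}"] unfolding e by simp
  moreover have "card (X \<inter> Y \<inter> {i,j}) = (if i \<in> X \<and> i \<in> Y then 1 else 0)
     + (if j \<in> X \<and> j \<in> Y then 1 else 0)"
    using assms(2) by (cases "i \<in> X \<and> i \<in> Y"; cases "j \<in> X \<and> j \<in> Y") (auto simp: Int_insert_right)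
  ultimately show ?thesis by simp
qed

lemma shz_rest: "shz i j F Z - {i,j} = Z - {i,j}"
  unfolding shz_def by auto

lemma shz_tint:
  assumes tF: "tint t F" and ij: "i \<noteq> j" and fin: "\<forall>Z\<in>F. finite Z"
  shows "tint t (shz i j F ` F)"
  unfolding tint_def
proof (intro ballI)
  fix A' B' assume "A' \<in> shz i j F ` F" "B' \<in> shz i j F ` F"
  then obtain A B where AB: "A \<in> F" "B \<in> F" "A' = shz i j F A" "B' = shz i j F B" by auto
  have fA: "finite A" "finite B" using fin AB by auto
  have finX: "finite (shz i j F X)" if "finite X" for X using that unfolding shz_def by auto
  have tAB: "t \<le> card (A \<inter> B)" using tF AB unfolding tint_def by auto
  let ?c = "card ((A - {i,j}) \<inter> (B - {i,j}))"
  have cA'B': "card (A' \<inter> B') = ?c + (if i \<in> A' \<and> i \<in> B' then 1 else 0) + (if j \<in> A' \<and> j \<in> B' then 1 else 0)"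
    using card_split2[OF finX[OF fA(1)] ij, of B'] AB shz_rest[of i j F A] shz_rest[of i j F B] by simp
  have cAB: "card (A \<inter> B) = ?c + (if i \<in> A \<and> i \<in> B then 1 else 0) + (if j \<in> A \<and> j \<in> B then 1 else 0)"
    using card_split2[OF fA(1) ij, of B] by simp
  define mA where "mA = (j \<in> A \<and> i \<notin> A \<and> insert i (A - {j}) \<notin> F)"
  define mB where "mB = (j \<in> B \<and> i \<notin> B \<and> insert i (B - {j}) \<notin> F)"
  have A': "A' = (if mA then insert i (A - {j}) else A)" using AB(3) unfolding shz_def mA_def by simp
  have B': "B' = (if mB then insert i (B - {j}) else B)" using AB(4) unfolding shz_def mB_def by simp
  consider (nn) "A' = A" "B' = B" | (mm) "A' = insert i (A - {j})" "B' = insert i (B - {j})"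
       "j \<in> A" "i \<notin> A" "j \<in> B" "i \<notin> B"
    | (mn) "A' = insert i (A - {j})" "j \<in> A" "i \<notin> A" "insert i (A - {j}) \<notin> F" "B' = B"
       "\<not> (j \<in> B \<and> i \<notin> B \<and> insert i (B - {j}) \<notin> F)"
    | (nm) "B' = insert i (B - {j})" "j \<in> B" "i \<notin> B" "insert i (B - {j}) \<notin> F" "A' = A"
       "\<not> (j \<in> A \<and> i \<notin> A \<and> insert i (A - {j}) \<notin> F)"
  proof (cases mA; cases mB)
    assume "mA" "mB" then show ?thesis using that(2) A' B' mA_def mB_def by simp
  next
    assume "mA" "\<not> mB" then show ?thesis using that(3) A' B' mA_def mB_def by simp
  next
    assume "\<not> mA" "mB" then show ?thesis using that(4) A' B' mA_def mB_def by simp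
  next
    assume "\<not> mA" "\<not> mB" then show ?thesis using that(1) A' B' by simp
  qed
  then show "t \<le> card (A' \<inter> B')"
  proof cases
    case nn then show ?thesis using tAB by simp
  next
    case mm
    have m: "i \<in> A'" "j \<notin> A'" "i \<in> B'" "j \<notin> B'" using mm by auto
    have "card (A' \<inter> B') = ?c + 1" using cA'B' m by simp
    moreover have "card (A \<inter> B) = ?c + 1" using cAB mm(3-6) ij by simp
    ultimately show ?thesis using tAB by simp
  next
    case mn
    have m: "i \<in> A'" "j \<notin> A'" using mn by auto
    show ?thesis
    proof (cases "j \<in> B \<and> i \<notin> B")
      case False
      have e1: "card (A' \<inter> B') = ?c + (if i \<in> B then 1 else 0)" using cA'B' m mn(5) by simp
      have e2: "card (A \<inter> B) = ?c + (if j \<in> B then 1 else 0)" using cAB mn(2,3) by simp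
      have "card (A \<inter> B) \<le> card (A' \<inter> B')" unfolding e1 e2 using False by auto
      then show ?thesis using tAB by linarith
    next
      case True
      let ?B2 = "insert i (B - {j})"
      have B2F: "?B2 \<in> F" using True mn by auto
      have "t \<le> card (A \<inter> ?B2)" using tF AB B2F unfolding tint_def by auto
      moreover have "card (A \<inter> ?B2) = ?c + (if i \<in> A \<and> i \<in> ?B2 then 1 else 0) + (if j \<in> A \<and> j \<in> ?B2 then 1 else 0)"
      proof -
        have "?B2 - {i,j} = B - {i,j}" by auto
        then show ?thesis using card_split2[OF fA(1) ij, of ?B2] by simp
      qed
      moreover have "card (A' \<inter> B') = ?c" using cA'B' m mn(5) True by simp
      ultimately show ?thesis using mn(2,3) True ij by simp
    qed
  next
    case nm
    have m: "i \<in> B'" "j \<notin> B'" using nm by auto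
    show ?thesis
    proof (cases "j \<in> A \<and> i \<notin> A")
      case False
      have e1: "card (A' \<inter> B') = ?c + (if i \<in> A then 1 else 0)" using cA'B' m nm(5) by simp
      have e2: "card (A \<inter> B) = ?c + (if j \<in> A then 1 else 0)" using cAB nm(2,3) by simp
      have "card (A \<inter> B) \<le> card (A' \<inter> B')" unfolding e1 e2 using False by auto
      then show ?thesis using tAB by linarith
    next
      case True
      let ?A2 = "insert i (A - {j})"
      have A2F: "?A2 \<in> F" using True nm by auto
      have "t \<le> card (?A2 \<inter> B)" using tF AB A2F unfolding tint_def by auto
      moreover have "card (?A2 \<inter> B) = ?c + (if i \<in> ?A2 \<and> i \<in> B then 1 else 0) + (if j \<in> ?A2 \<and> j \<in> B then 1 else 0)"
      proof -
        have "?A2 - {i,j} = A - {i,j}" by auto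
        moreover have "finite ?A2" using fA by simp
        ultimately show ?thesis using card_split2[of ?A2 i j B] ij by simp
      qed
      moreover have "card (A' \<inter> B') = ?c" using cA'B' m nm(5) True by simp
      ultimately show ?thesis using nm(2,3) True ij by simp
    qed
  qed
qed

lemma shz_inj: "inj_on (shz i j F) F"
proof (rule inj_onI)
  fix A B assume AB: "A \<in> F" "B \<in> F" "shz i j F A = shz i j F B"
  have key: "A = B" if "j \<in> A" "i \<notin> A" "j \<in> B" "i \<notin> B" "insert i (A - {j}) = insert i (B - {j})" for A B :: "nat set"
  proof -
    have "A - {j} = B - {j}" using that by (metis Diff_insert_absorb Diff_iff)
    then show ?thesis using that(1,3) by (metis insert_Diff)
  qed
  show "A = B"
  proof (cases "j \<in> A \<and> i \<notin> A \<and> insert i (A - {j}) \<notin> F"; cases "j \<in> B \<and> i \<notin> B \<and> insert i (B - {j}) \<notin> F")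
    assume a: "j \<in> A \<and> i \<notin> A \<and> insert i (A - {j}) \<notin> F" and b: "j \<in> B \<and> i \<notin> B \<and> insert i (B - {j}) \<notin> F"
    then show ?thesis using AB(3) key unfolding shz_def if_P[OF a] if_P[OF b] by simp
  next
    assume a: "j \<in> A \<and> i \<notin> A \<and> insert i (A - {j}) \<notin> F" and b: "\<not> (j \<in> B \<and> i \<notin> B \<and> insert i (B - {j}) \<notin> F)"
    then have "insert i (A - {j}) = B" using AB(3) unfolding shz_def if_P[OF a] if_not_P[OF b] by simp
    then show ?thesis using a AB(2) by simp
  next
    assume a: "\<not> (j \<in> A \<and> i \<notin> A \<and> insert i (A - {j}) \<notin> F)" and b: "j \<in> B \<and> i \<notin> B \<and> insert i (B - {j}) \<notin> F"
    then have "A = insert i (B - {j})" using AB(3) unfolding shz_def if_not_P[OF a] if_P[OF b] by simp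
    then show ?thesis using b AB(1) by simp
  next
    assume a: "\<not> (j \<in> A \<and> i \<notin> A \<and> insert i (A - {j}) \<notin> F)" and b: "\<not> (j \<in> B \<and> i \<notin> B \<and> insert i (B - {j}) \<notin> F)"
    then show ?thesis using AB(3) unfolding shz_def if_not_P[OF a] if_not_P[OF b] by simp
  qed
qed

lemma shz_card: assumes "finite Z" shows "card (shz i j F Z) = card Z"
proof (cases "j \<in> Z \<and> i \<notin> Z \<and> insert i (Z - {j}) \<notin> F")
  case True
  then have "card Z > 0" using assms card_gt_0_iff by blast
  then show ?thesis using True assms unfolding shz_def if_P[OF True] by (simp add: card_insert_if card_Diff_singleton)
next
  case False then show ?thesis unfolding shz_def if_not_P[OF False] by simp
qed

lemma shz_sum_le: assumes "finite Z" "i < j" shows "\<Sum>(shz i j F Z) \<le> \<Sum>Z"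
proof (cases "j \<in> Z \<and> i \<notin> Z \<and> insert i (Z - {j}) \<notin> F")
  case True
  have "\<Sum>(insert i (Z - {j})) = i + \<Sum>(Z - {j})" using True assms by (simp add: sum.insert)
  moreover have "\<Sum>Z = j + \<Sum>(Z - {j})" using True assms sum.remove[of Z j "\<lambda>x. x"] by simp
  ultimately show ?thesis using True assms unfolding shz_def if_P[OF True] by simp
next
  case False then show ?thesis unfolding shz_def if_not_P[OF False] by simp
qed

lemma shz_sum_less: assumes "finite Z" "i < j" "j \<in> Z" "i \<notin> Z" "insert i (Z - {j}) \<notin> F"
  shows "\<Sum>(shz i j F Z) < \<Sum>Z"
proof -
  have "\<Sum>(insert i (Z - {j})) = i + \<Sum>(Z - {j})" using assms by (simp add: sum.insert)
  moreover have "\<Sum>Z = j + \<Sum>(Z - {j})" using assms sum.remove[of Z j "\<lambda>x. x"] by simp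
  moreover have c: "j \<in> Z \<and> i \<notin> Z \<and> insert i (Z - {j}) \<notin> F" using assms by simp
  ultimately show ?thesis using assms unfolding shz_def if_P[OF c] by simp
qed

lemma Wt_shz: assumes "\<forall>Z\<in>F. finite Z" shows "Wt q n (shz i j F ` F) = Wt q n F"
  unfolding Wt_def using assms by (simp add: sum.reindex[OF shz_inj] shz_card)

lemma Phi_shz: assumes "finite F" "\<forall>Z\<in>F. finite Z" "i < j" "Z \<in> F" "j \<in> Z" "i \<notin> Z" "insert i (Z - {j}) \<notin> F"
  shows "Phi (shz i j F ` F) < Phi F"
proof -
  have "Phi (shz i j F ` F) = (\<Sum>Z\<in>F. \<Sum>(shz i j F Z))"
    unfolding Phi_def by (simp add: sum.reindex[OF shz_inj])
  also have "\<dots> < (\<Sum>Z\<in>F. \<Sum>Z)"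
  proof (rule sum_strict_mono_ex1)
    show "finite F" using assms by simp
    show "\<forall>x\<in>F. \<Sum>(shz i j F x) \<le> \<Sum>x" using assms shz_sum_le by auto
    show "\<exists>a\<in>F. \<Sum>(shz i j F a) < \<Sum>a" using assms shz_sum_less by blast
  qed
  finally show ?thesis unfolding Phi_def .
qed

definition upc :: "nat \<Rightarrow> nat set set \<Rightarrow> bool" where
  "upc n F \<longleftrightarrow> (\<forall>Z\<in>F. \<forall>Y. Z \<subseteq> Y \<and> Y \<subseteq> {0..<n} \<longrightarrow> Y \<in> F)"

definition shifted :: "nat set set \<Rightarrow> bool" where
  "shifted F \<longleftrightarrow> (\<forall>Z\<in>F. \<forall>i j. j \<in> Z \<and> i < j \<and> i \<notin> Z \<longrightarrow> insert i (Z - {j}) \<in> F)"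

lemma extremal:
  assumes F0: "F0 \<subseteq> Pow {0..<n}" "tint t F0" and q: "2 \<le> q"
  shows "\<exists>F. F \<subseteq> Pow {0..<n} \<and> tint t F \<and> Wt q n F0 \<le> Wt q n F \<and> upc n F \<and> shifted F"
proof -
  define C where "C = {F. F \<subseteq> Pow {0..<n} \<and> tint t F}"
  have finC: "finite C" unfolding C_def
    by (rule finite_subset[of _ "Pow (Pow {0..<n})"]) auto
  have F0C: "F0 \<in> C" using F0 unfolding C_def by auto
  define m where "m = Max (Wt q n ` C)"
  have "m \<in> Wt q n ` C" unfolding m_def using finC F0C by (intro Max_in) auto
  then obtain F1 where F1: "F1 \<in> C" "Wt q n F1 = m" by auto
  have maxW: "Wt q n G \<le> m" if "G \<in> C" for G unfolding m_def using finC that by (intro Max_ge) auto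
  define C1 where "C1 = {G\<in>C. Wt q n G = m}"
  have finC1: "finite C1" using finC unfolding C1_def by auto
  have F1C1: "F1 \<in> C1" using F1 unfolding C1_def by auto
  define p where "p = Min (Phi ` C1)"
  have "p \<in> Phi ` C1" unfolding p_def using finC1 F1C1 by (intro Min_in) auto
  then obtain F where F: "F \<in> C1" "Phi F = p" by auto
  have minP: "p \<le> Phi G" if "G \<in> C1" for G unfolding p_def using finC1 that by (intro Min_le) auto
  have FP: "F \<subseteq> Pow {0..<n}" and Ft: "tint t F" and FW: "Wt q n F = m"
    using F unfolding C1_def C_def by auto
  have finF: "finite F" using FP by (rule finite_subset) auto
  have finZ: "\<forall>Z\<in>F. finite Z" using FP by (auto intro: finite_subset)
  have up: "upc n F"
    unfolding upc_def
  proof (intro ballI allI impI)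
    fix Z Y assume ZY: "Z \<in> F" "Z \<subseteq> Y \<and> Y \<subseteq> {0..<n}"
    show "Y \<in> F"
    proof (rule ccontr)
      assume YF: "Y \<notin> F"
      have finY: "finite Y" using ZY by (auto intro: finite_subset)
      have cZ: "t \<le> card (Z \<inter> B)" if "B \<in> F" for B using Ft ZY that unfolding tint_def by auto
      have tY: "t \<le> card (Y \<inter> B)" if "B \<in> F" for B
        using cZ[OF that] card_mono[of "Y \<inter> B" "Z \<inter> B"] finY ZY by fastforce
      have tYY: "t \<le> card (Y \<inter> Y)" using cZ[OF ZY(1)] card_mono[of Y "Z \<inter> Z"] finY ZY by fastforce
      have "insert Y F \<in> C" unfolding C_def
        using FP ZY Ft tY tYY unfolding tint_def by (auto simp: Int_commute)
      then have "Wt q n (insert Y F) \<le> m" by (rule maxW)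
      moreover have "Wt q n (insert Y F) = (q-1)^(n - card Y) + Wt q n F"
        unfolding Wt_def using finF YF by simp
      moreover have "0 < (q-1)^(n - card Y)" using q by simp
      ultimately show False using FW by simp
    qed
  qed
  have sh: "shifted F"
    unfolding shifted_def
  proof (intro ballI allI impI)
    fix Z i j assume Z: "Z \<in> F" and ij: "j \<in> Z \<and> i < j \<and> i \<notin> Z"
    show "insert i (Z - {j}) \<in> F"
    proof (rule ccontr)
      assume nF: "insert i (Z - {j}) \<notin> F"
      define G where "G = shz i j F ` F"
      have GP: "G \<subseteq> Pow {0..<n}"
      proof
        fix X assume "X \<in> G"
        then obtain Y where Y: "Y \<in> F" "X = shz i j F Y" unfolding G_def by auto
        then have "Y \<subseteq> {0..<n}" using FP by auto
        then show "X \<in> Pow {0..<n}" using Y ij unfolding shz_def by auto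
      qed
      have "tint t G" unfolding G_def using shz_tint[OF Ft _ finZ] ij by simp
      moreover have "Wt q n G = m" unfolding G_def using Wt_shz[OF finZ] FW by simp
      ultimately have "G \<in> C1" using GP unfolding C1_def C_def by auto
      then have "p \<le> Phi G" by (rule minP)
      moreover have "Phi G < Phi F" unfolding G_def
        using Phi_shz[OF finF finZ _ Z _ _ nF] ij by auto
      ultimately show False using F by simp
    qed
  qed
  have "Wt q n F0 \<le> Wt q n F" using maxW[OF F0C] FW by simp
  then show ?thesis using FP Ft up sh by blast
qed

lemma dom_closed_aux:
  assumes up: "upc n F" and sh: "shifted F" and FP: "F \<subseteq> Pow {0..<n}" and B: "B \<subseteq> {0..<n}"
  shows "\<forall>Z. Z \<in> F \<and> card (Z - B) = k \<and> (\<forall>m. card (Z \<inter> {..<m}) \<le> card (B \<inter> {..<m})) \<longrightarrow> B \<in> F"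
proof (induction k)
  case 0
  show ?case
  proof (intro allI impI)
    fix Z assume Z: "Z \<in> F \<and> card (Z - B) = 0 \<and> (\<forall>m. card (Z \<inter> {..<m}) \<le> card (B \<inter> {..<m}))"
    have finZ: "finite Z" using Z FP by (auto intro: finite_subset)
    then have fZB: "finite (Z - B)" by simp
    have c0: "card (Z - B) = 0" using Z by blast
    have "Z - B = {}" using card_0_eq[OF fZB] c0 by simp
    then have "Z \<subseteq> B" by auto
    then show "B \<in> F" using up Z B unfolding upc_def by blast
  qed
next
  case (Suc k)
  show ?case
  proof (intro allI impI)
    fix Z assume Z: "Z \<in> F \<and> card (Z - B) = Suc k \<and> (\<forall>m. card (Z \<inter> {..<m}) \<le> card (B \<inter> {..<m}))"
    have ZP: "Z \<subseteq> {0..<n}" using Z FP by auto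
    have finZ: "finite Z" using ZP by (auto intro: finite_subset)
    have finB: "finite B" using B by (auto intro: finite_subset)
    have ne: "Z - B \<noteq> {}"
    proof
      assume e: "Z - B = {}"
      have "card (Z - B) = 0" by (simp only: e card.empty)
      then show False using Z by simp
    qed
    define j where "j = Min (Z - B)"
    have jZB: "j \<in> Z - B" unfolding j_def using ne finZ by (intro Min_in) auto
    have jmin: "z \<in> B" if "z \<in> Z" "z < j" for z
    proof (rule ccontr)
      assume "z \<notin> B"
      then have "j \<le> z" unfolding j_def using finZ that by (intro Min_le) auto
      then show False using that by simp
    qed
    have sub: "Z \<inter> {..<j} \<subseteq> B \<inter> {..<j}" using jmin by auto
    have "card (Z \<inter> {..<Suc j}) \<le> card (B \<inter> {..<Suc j})" using Z by blast
    moreover have "Z \<inter> {..<Suc j} = insert j (Z \<inter> {..<j})" using jZB by auto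
    moreover have "B \<inter> {..<Suc j} = B \<inter> {..<j}" using jZB by (auto simp: less_Suc_eq)
    ultimately have "card (Z \<inter> {..<j}) < card (B \<inter> {..<j})" using finZ by simp
    then have "\<not> (B \<inter> {..<j} \<subseteq> Z \<inter> {..<j})" using card_mono[of "Z \<inter> {..<j}" "B \<inter> {..<j}"] finZ by auto
    then obtain i where i: "i \<in> B" "i < j" "i \<notin> Z" by auto
    define Z' where "Z' = insert i (Z - {j})"
    have Z'F: "Z' \<in> F" using sh Z jZB i unfolding shifted_def Z'_def by auto
    have "Z' - B = (Z - B) - {j}" unfolding Z'_def using i by auto
    then have cZ': "card (Z' - B) = k" using Z jZB finZ by (simp add: card_Diff_singleton)
    have domZ': "card (Z' \<inter> {..<m}) \<le> card (B \<inter> {..<m})" for m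
    proof (cases "m \<le> j")
      case True
      have "Z' \<inter> {..<m} \<subseteq> B \<inter> {..<m}" unfolding Z'_def using i jmin True by auto
      then show ?thesis using finB by (intro card_mono) auto
    next
      case False
      have jin: "j \<in> Z \<inter> {..<m}" using False jZB by auto
      have "Z' \<inter> {..<m} = insert i ((Z \<inter> {..<m}) - {j})" unfolding Z'_def using i False by auto
      then have "card (Z' \<inter> {..<m}) \<le> card ((Z \<inter> {..<m}) - {j}) + 1"
        using finZ by (simp add: card_insert_if)
      also have "\<dots> = card (Z \<inter> {..<m})"
      proof -
        have "card (Z \<inter> {..<m}) > 0" using jin finZ by (auto simp: card_gt_0_iff)
        then show ?thesis using card_Diff_singleton[OF jin] jin finZ by simp
      qed
      also have "\<dots> \<le> card (B \<inter> {..<m})" using Z by blast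
      finally show ?thesis .
    qed
    show "B \<in> F" using Suc.IH Z'F cZ' domZ' by blast
  qed
qed

lemma dom_closed:
  assumes "upc n F" "shifted F" "F \<subseteq> Pow {0..<n}" "B \<subseteq> {0..<n}" "Z \<in> F"
    "\<forall>m. card (Z \<inter> {..<m}) \<le> card (B \<inter> {..<m})"
  shows "B \<in> F"
  using dom_closed_aux[OF assms(1-4), of "card (Z - B)"] assms(5,6) by blast

lemma frankl:
  assumes FP: "F \<subseteq> Pow {0..<n}" and Ft: "tint t F" and up: "upc n F" and sh: "shifted F"
    and Z: "Z \<in> F" and t1: "1 \<le> t"
    and nr: "\<forall>m\<le>n. int (card (Z \<inter> {..<m})) < int t + int (card ({..<m} - Z))"
  shows False
proof -
  have ZP: "Z \<subseteq> {0..<n}" using Z FP by auto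
  have finZ: "finite Z" using ZP by (auto intro: finite_subset)
  have tZ: "t \<le> card Z" using Ft Z unfolding tint_def by fastforce
  have Zn: "Z \<inter> {..<n} = Z" using ZP by auto
  define p where "p = (LEAST m. t - 1 \<le> card (Z \<inter> {..<m}))"
  have ex: "t - 1 \<le> card (Z \<inter> {..<n})" using tZ Zn by simp
  have pn: "p \<le> n" unfolding p_def using ex by (rule Least_le)
  have pge: "t - 1 \<le> card (Z \<inter> {..<p})" unfolding p_def using ex by (rule LeastI)
  have cp: "card (Z \<inter> {..<p}) = t - 1"
  proof (cases p)
    case 0 then show ?thesis using pge by simp
  next
    case (Suc p')
    have "\<not> t - 1 \<le> card (Z \<inter> {..<p'})" unfolding p_def
      using Suc p_def not_less_Least[of p' "\<lambda>m. t - 1 \<le> card (Z \<inter> {..<m})"] by simp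
    moreover have "card (Z \<inter> {..<Suc p'}) \<le> card (Z \<inter> {..<p'}) + 1"
    proof -
      have "Z \<inter> {..<Suc p'} \<subseteq> insert p' (Z \<inter> {..<p'})" by auto
      then have "card (Z \<inter> {..<Suc p'}) \<le> card (insert p' (Z \<inter> {..<p'}))" by (intro card_mono) auto
      also have "\<dots> \<le> card (Z \<inter> {..<p'}) + 1" by (simp add: card_insert_if)
      finally show ?thesis .
    qed
    ultimately show ?thesis using pge Suc by simp
  qed
  define B where "B = (Z \<inter> {..<p}) \<union> ({0..<n} - Z)"
  have BP: "B \<subseteq> {0..<n}" unfolding B_def using ZP by auto
  have finB: "finite B" using BP by (auto intro: finite_subset)
  have dom: "card (Z \<inter> {..<m}) \<le> card (B \<inter> {..<m})" for m
  proof (cases "m \<le> p")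
    case True
    have "Z \<inter> {..<m} \<subseteq> B \<inter> {..<m}" unfolding B_def using True by auto
    then show ?thesis using finB by (intro card_mono) auto
  next
    case False
    define m' where "m' = min m n"
    have e1: "Z \<inter> {..<m} = Z \<inter> {..<m'}" unfolding m'_def using ZP by auto
    have e2: "B \<inter> {..<m} = B \<inter> {..<m'}" unfolding m'_def using BP by auto
    have m'n: "m' \<le> n" and pm': "p \<le> m'" unfolding m'_def using False pn by auto
    have sub: "(Z \<inter> {..<p}) \<union> ({..<m'} - Z) \<subseteq> B \<inter> {..<m'}" unfolding B_def using m'n pm' by auto
    have "card ((Z \<inter> {..<p}) \<union> ({..<m'} - Z)) = card (Z \<inter> {..<p}) + card ({..<m'} - Z)"
      by (rule card_Un_disjoint) auto
    then have "t - 1 + card ({..<m'} - Z) \<le> card (B \<inter> {..<m'})"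
      using card_mono[OF _ sub] finB cp by simp
    moreover have "int (card (Z \<inter> {..<m'})) < int t + int (card ({..<m'} - Z))" using nr m'n by simp
    ultimately show ?thesis unfolding e1 e2 using t1 by linarith
  qed
  have "B \<in> F" using dom_closed[OF up sh FP BP Z] dom by blast
  then have "t \<le> card (Z \<inter> B)" using Ft Z unfolding tint_def by blast
  moreover have "Z \<inter> B = Z \<inter> {..<p}" unfolding B_def by auto
  ultimately show False using cp t1 by simp
qed

lemma reach_prefix:
  "reachL s xs \<longleftrightarrow> (\<exists>m\<le>length xs. s \<le> int (length (filter (\<lambda>b. b) (take m xs))) - int (length (filter Not (take m xs))))"
proof (induction xs arbitrary: s)
  case Nil then show ?case by simp
next
  case (Cons x xs)
  show ?case
  proof
    assume "reachL s (x # xs)"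
    then consider "s \<le> 0" | "reachL (if x then s - 1 else s + 1) xs" by auto
    then show "\<exists>m\<le>length (x # xs). s \<le> int (length (filter (\<lambda>b. b) (take m (x # xs)))) - int (length (filter Not (take m (x # xs))))"
    proof cases
      case 1 then show ?thesis by (intro exI[of _ 0]) simp
    next
      case 2
      then obtain m where m: "m \<le> length xs"
        "(if x then s - 1 else s + 1) \<le> int (length (filter (\<lambda>b. b) (take m xs))) - int (length (filter Not (take m xs)))"
        using Cons.IH by blast
      show ?thesis using m by (intro exI[of _ "Suc m"]) (cases x, auto)
    qed
  next
    assume "\<exists>m\<le>length (x # xs). s \<le> int (length (filter (\<lambda>b. b) (take m (x # xs)))) - int (length (filter Not (take m (x # xs))))"
    then obtain m where m: "m \<le> length (x # xs)"
      "s \<le> int (length (filter (\<lambda>b. b) (take m (x # xs)))) - int (length (filter Not (take m (x # xs))))" by blast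
    show "reachL s (x # xs)"
    proof (cases m)
      case 0 then show ?thesis using m by simp
    next
      case (Suc m')
      have "reachL (if x then s - 1 else s + 1) xs"
        using Cons.IH m Suc by (cases x) (auto intro!: exI[of _ m'])
      then show ?thesis by simp
    qed
  qed
qed

definition bl :: "nat \<Rightarrow> nat set \<Rightarrow> bool list" where
  "bl n Z = map (\<lambda>i. i \<in> Z) [0..<n]"

lemma length_bl [simp]: "length (bl n Z) = n" unfolding bl_def by simp

lemma len_filter_upt: "length (filter P [0..<m]) = card {i. i < m \<and> P i}"
proof (induction m)
  case 0 then show ?case by simp
next
  case (Suc m)
  have "{i. i < Suc m \<and> P i} = {i. i < m \<and> P i} \<union> (if P m then {m} else {})" by (auto simp: less_Suc_eq)
  then show ?case using Suc by (simp add: card_insert_if)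
qed

lemma bl_counts:
  assumes "m \<le> n"
  shows "length (filter (\<lambda>b. b) (take m (bl n Z))) = card (Z \<inter> {..<m})"
    "length (filter Not (take m (bl n Z))) = card ({..<m} - Z)"
proof -
  have t: "take m (bl n Z) = map (\<lambda>i. i \<in> Z) [0..<m]" unfolding bl_def using assms
    by (simp add: take_map min_def)
  have "{i. i < m \<and> i \<in> Z} = Z \<inter> {..<m}" by auto
  then show "length (filter (\<lambda>b. b) (take m (bl n Z))) = card (Z \<inter> {..<m})"
    unfolding t by (simp add: filter_map comp_def len_filter_upt)
  have "{i. i < m \<and> i \<notin> Z} = {..<m} - Z" by auto
  then show "length (filter Not (take m (bl n Z))) = card ({..<m} - Z)"
    unfolding t by (simp add: filter_map comp_def len_filter_upt)
qed

lemma binary_bound: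
  assumes F0: "F0 \<subseteq> Pow {0..<n}" "tint t F0" and q: "2 \<le> q"
  shows "Wt q n F0 * (q-1)^t \<le> q^n"
proof -
  obtain F where F: "F \<subseteq> Pow {0..<n}" "tint t F" "Wt q n F0 \<le> Wt q n F" "upc n F" "shifted F"
    using extremal[OF F0 q] by blast
  have reach: "reachL (int t) (bl n Z)" if Z: "Z \<in> F" for Z
  proof (cases "t = 0")
    case True then show ?thesis by (simp add: reachL_nonpos)
  next
    case False
    show ?thesis
    proof (rule ccontr)
      assume nr: "\<not> reachL (int t) (bl n Z)"
      have "\<forall>m\<le>n. int (card (Z \<inter> {..<m})) < int t + int (card ({..<m} - Z))"
      proof (intro allI impI)
        fix m assume m: "m \<le> n"
        have "\<not> (int t \<le> int (length (filter (\<lambda>b. b) (take m (bl n Z)))) - int (length (filter Not (take m (bl n Z)))))"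
          using nr m unfolding reach_prefix by auto
        then show "int (card (Z \<inter> {..<m})) < int t + int (card ({..<m} - Z))"
          using bl_counts[OF m, of Z] by simp
      qed
      then show False using frankl[OF F(1,2,4,5) Z] False by simp
    qed
  qed
  have inj: "inj_on (bl n) F"
  proof (rule inj_onI)
    fix X Y assume XY: "X \<in> F" "Y \<in> F" "bl n X = bl n Y"
    have "\<forall>i<n. (i \<in> X) = (i \<in> Y)"
    proof (intro allI impI)
      fix i assume "i < n"
      then have "bl n X ! i = bl n Y ! i" using XY by simp
      then show "(i \<in> X) = (i \<in> Y)" using \<open>i < n\<close> unfolding bl_def by simp
    qed
    moreover have "X \<subseteq> {0..<n}" "Y \<subseteq> {0..<n}" using XY F(1) by auto
    ultimately show "X = Y" by auto
  qed
  have cnt: "length (filter Not (bl n Z)) = n - card Z" if "Z \<in> F" for Z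
  proof -
    have "Z \<subseteq> {0..<n}" using that F(1) by auto
    moreover have "take n (bl n Z) = bl n Z" unfolding bl_def by simp
    ultimately show ?thesis using bl_counts(2)[of n n Z]
      by (simp add: card_Diff_subset finite_subset lessThan_atLeast0)
  qed
  have "Wt q n F = (\<Sum>xs\<in>bl n ` F. (q-1)^(length (filter Not xs)))"
    unfolding Wt_def using inj cnt by (simp add: sum.reindex)
  also have "\<dots> \<le> (\<Sum>xs\<in>{xs. length xs = n \<and> reachL (int t) xs}. (q-1)^(length (filter Not xs)))"
    using reach by (intro sum_mono2 fin_lists_len) (auto simp: bl_def)
  finally have "Wt q n F * (q-1)^t \<le> (\<Sum>xs\<in>{xs. length xs = n \<and> reachL (int t) xs}. (q-1)^(length (filter Not xs))) * (q-1)^(nat (int t))"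
    by simp
  also have "\<dots> \<le> q^n" using walk_bound[of q n "int t"] q by simp
  finally show ?thesis using F(3) by (meson le_trans mult_le_mono1)
qed

definition agree :: "nat \<Rightarrow> (nat \<Rightarrow> 'a) \<Rightarrow> (nat \<Rightarrow> 'a) \<Rightarrow> nat" where
  "agree n x y = card {j. j < n \<and> x j = y j}"

definition tagree :: "nat \<Rightarrow> nat \<Rightarrow> (nat \<Rightarrow> 'a) set \<Rightarrow> bool" where
  "tagree n t M \<longleftrightarrow> (\<forall>x\<in>M. \<forall>y\<in>M. t \<le> agree n x y)"

definition shq :: "nat \<Rightarrow> 'a \<Rightarrow> 'a \<Rightarrow> (nat \<Rightarrow> 'a) set \<Rightarrow> (nat \<Rightarrow> 'a) \<Rightarrow> (nat \<Rightarrow> 'a)" where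
  "shq i a z0 M x = (if x i = a \<and> x(i:=z0) \<notin> M then x(i:=z0) else x)"

definition Psi :: "nat \<Rightarrow> 'a \<Rightarrow> (nat \<Rightarrow> 'a) set \<Rightarrow> nat" where
  "Psi n z0 M = (\<Sum>x\<in>M. card {j. j < n \<and> x j \<noteq> z0})"

definition ar :: "nat \<Rightarrow> nat \<Rightarrow> (nat \<Rightarrow> 'a) \<Rightarrow> (nat \<Rightarrow> 'a) \<Rightarrow> nat" where
  "ar n i x y = card {j. j < n \<and> j \<noteq> i \<and> x j = y j}"

lemma agree_split: assumes "i < n"
  shows "agree n x y = ar n i x y + (if x i = y i then 1 else 0)"
proof -
  have e: "{j. j < n \<and> x j = y j} = {j. j < n \<and> j \<noteq> i \<and> x j = y j} \<union> (if x i = y i then {i} else {})"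
    using assms by auto
  show ?thesis unfolding agree_def ar_def e
    by (subst card_Un_disjoint) auto
qed

lemma ar_upd1 [simp]: "ar n i (x(i:=c)) y = ar n i x y"
  unfolding ar_def by (rule arg_cong[where f=card]) auto

lemma ar_upd2 [simp]: "ar n i x (y(i:=c)) = ar n i x y"
  unfolding ar_def by (rule arg_cong[where f=card]) auto

lemma agree_sym: "agree n x y = agree n y x"
  unfolding agree_def by (metis (no_types, lifting))

lemma shq_inj: "inj_on (shq i a z0 M) M"
proof (rule inj_onI)
  fix x y assume xy: "x \<in> M" "y \<in> M" "shq i a z0 M x = shq i a z0 M y"
  show "x = y"
  proof (cases "x i = a \<and> x(i:=z0) \<notin> M"; cases "y i = a \<and> y(i:=z0) \<notin> M")
    assume a: "x i = a \<and> x(i:=z0) \<notin> M" and b: "y i = a \<and> y(i:=z0) \<notin> M"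
    then have "x(i:=z0) = y(i:=z0)" using xy(3) unfolding shq_def if_P[OF a] if_P[OF b] by blast
    then have "x(i:=a) = y(i:=a)" by (metis fun_upd_upd)
    then show ?thesis using a b by (metis fun_upd_triv)
  next
    assume a: "x i = a \<and> x(i:=z0) \<notin> M" and b: "\<not> (y i = a \<and> y(i:=z0) \<notin> M)"
    then have "x(i:=z0) = y" using xy(3) unfolding shq_def if_P[OF a] if_not_P[OF b] by blast
    then show ?thesis using a xy(2) by simp
  next
    assume a: "\<not> (x i = a \<and> x(i:=z0) \<notin> M)" and b: "y i = a \<and> y(i:=z0) \<notin> M"
    then have "x = y(i:=z0)" using xy(3) unfolding shq_def if_not_P[OF a] if_P[OF b] by blast
    then show ?thesis using b xy(1) by simp
  next
    assume a: "\<not> (x i = a \<and> x(i:=z0) \<notin> M)" and b: "\<not> (y i = a \<and> y(i:=z0) \<notin> M)"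
    then show ?thesis using xy(3) unfolding shq_def if_not_P[OF a] if_not_P[OF b] by blast
  qed
qed

lemma shq_one:
  assumes tM: "tagree n t M" and i: "i < n" and a: "a \<noteq> z0"
    and x: "x \<in> M" "x i = a" "x(i:=z0) \<notin> M" and y: "y \<in> M" "\<not> (y i = a \<and> y(i:=z0) \<notin> M)"
  shows "t \<le> agree n (x(i:=z0)) y"
proof (cases "y i = a")
  case False
  have "agree n x y \<le> agree n (x(i:=z0)) y"
    using agree_split[OF i, of x y] agree_split[OF i, of "x(i:=z0)" y] False x(2) by simp
  then show ?thesis using tM x(1) y(1) unfolding tagree_def by fastforce
next
  case True
  then have yM: "y(i:=z0) \<in> M" using y by simp
  have "agree n x (y(i:=z0)) = agree n (x(i:=z0)) y"
    using agree_split[OF i, of x "y(i:=z0)"] agree_split[OF i, of "x(i:=z0)" y] True x(2) a by simp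
  then show ?thesis using tM x(1) yM unfolding tagree_def by metis
qed

lemma shq_tagree:
  assumes tM: "tagree n t M" and i: "i < n" and a: "a \<noteq> z0"
  shows "tagree n t (shq i a z0 M ` M)"
  unfolding tagree_def
proof (intro ballI)
  fix x' y' assume "x' \<in> shq i a z0 M ` M" "y' \<in> shq i a z0 M ` M"
  then obtain x y where xy: "x \<in> M" "y \<in> M" "x' = shq i a z0 M x" "y' = shq i a z0 M y" by auto
  show "t \<le> agree n x' y'"
  proof (cases "x i = a \<and> x(i:=z0) \<notin> M"; cases "y i = a \<and> y(i:=z0) \<notin> M")
    assume ca: "x i = a \<and> x(i:=z0) \<notin> M" and cb: "y i = a \<and> y(i:=z0) \<notin> M"
    have "agree n x' y' = agree n x y" unfolding xy(3,4) shq_def if_P[OF ca] if_P[OF cb]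
      using agree_split[OF i, of x y] agree_split[OF i, of "x(i:=z0)" "y(i:=z0)"] ca cb by simp
    then show ?thesis using tM xy unfolding tagree_def by metis
  next
    assume ca: "x i = a \<and> x(i:=z0) \<notin> M" and cb: "\<not> (y i = a \<and> y(i:=z0) \<notin> M)"
    show ?thesis unfolding xy(3,4) shq_def if_P[OF ca] if_not_P[OF cb]
      using shq_one[OF tM i a xy(1) _ _ xy(2) cb] ca by simp
  next
    assume ca: "\<not> (x i = a \<and> x(i:=z0) \<notin> M)" and cb: "y i = a \<and> y(i:=z0) \<notin> M"
    show ?thesis unfolding xy(3,4) shq_def if_not_P[OF ca] if_P[OF cb]
      using shq_one[OF tM i a xy(2) _ _ xy(1) ca] cb agree_sym by metis
  next
    assume ca: "\<not> (x i = a \<and> x(i:=z0) \<notin> M)" and cb: "\<not> (y i = a \<and> y(i:=z0) \<notin> M)"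
    show ?thesis unfolding xy(3,4) shq_def if_not_P[OF ca] if_not_P[OF cb]
      using tM xy unfolding tagree_def by metis
  qed
qed

lemma nz_card_le: "card {j. j < n \<and> (shq i a z0 M x) j \<noteq> z0} \<le> card {j. j < n \<and> x j \<noteq> z0}"
  unfolding shq_def by (auto intro!: card_mono)

lemma nz_card_less: assumes "i < n" "x i = a" "a \<noteq> z0" "x(i:=z0) \<notin> M"
  shows "card {j. j < n \<and> (shq i a z0 M x) j \<noteq> z0} < card {j. j < n \<and> x j \<noteq> z0}"
proof -
  have c: "x i = a \<and> x(i:=z0) \<notin> M" using assms by simp
  have "{j. j < n \<and> (shq i a z0 M x) j \<noteq> z0} \<subset> {j. j < n \<and> x j \<noteq> z0}"
    unfolding shq_def if_P[OF c] using assms by auto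
  then show ?thesis by (intro psubset_card_mono) auto
qed

definition downc :: "nat \<Rightarrow> 'a \<Rightarrow> (nat \<Rightarrow> 'a) set \<Rightarrow> bool" where
  "downc n z0 M \<longleftrightarrow> (\<forall>x\<in>M. \<forall>i<n. x(i:=z0) \<in> M)"

lemma qextremal:
  assumes fin: "finite S" and z0: "z0 \<in> S" and MP: "M \<subseteq> PiE {0..<n} (\<lambda>_. S)" and tM: "tagree n t M"
  shows "\<exists>M'. M' \<subseteq> PiE {0..<n} (\<lambda>_. S) \<and> tagree n t M' \<and> card M' = card M \<and> downc n z0 M'"
proof -
  define P where "P = PiE {0..<n} (\<lambda>_. S)"
  have finP: "finite P" unfolding P_def using fin by (simp add: finite_PiE)
  define C where "C = {M'. M' \<subseteq> P \<and> tagree n t M' \<and> card M' = card M}"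
  have finC: "finite C" unfolding C_def by (rule finite_subset[of _ "Pow P"]) (use finP in auto)
  have MC: "M \<in> C" unfolding C_def P_def using MP tM by auto
  define p where "p = Min (Psi n z0 ` C)"
  have "p \<in> Psi n z0 ` C" unfolding p_def using finC MC by (intro Min_in) auto
  then obtain M' where M': "M' \<in> C" "Psi n z0 M' = p" by auto
  have minP: "p \<le> Psi n z0 G" if "G \<in> C" for G unfolding p_def using finC that by (intro Min_le) auto
  have M'P: "M' \<subseteq> P" and tM': "tagree n t M'" and cM': "card M' = card M" using M' unfolding C_def by auto
  have finM': "finite M'" using finP M'P by (rule rev_finite_subset)
  have dc: "downc n z0 M'"
    unfolding downc_def
  proof (intro ballI allI impI)
    fix x i assume x: "x \<in> M'" and i: "i < n"
    show "x(i:=z0) \<in> M'"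
    proof (rule ccontr)
      assume nM: "x(i:=z0) \<notin> M'"
      then have a: "x i \<noteq> z0" using x by (metis fun_upd_triv)
      define G where "G = shq i (x i) z0 M' ` M'"
      have GP: "G \<subseteq> P"
      proof
        fix y assume "y \<in> G"
        then obtain w where w: "w \<in> M'" "y = shq i (x i) z0 M' w" unfolding G_def by auto
        have "w \<in> P" using w M'P by auto
        then have "w(i:=z0) \<in> P" unfolding P_def using z0 i
          by (metis PiE_fun_upd atLeastLessThan_iff insert_absorb zero_le)
        then show "y \<in> P" using w \<open>w \<in> P\<close> unfolding shq_def by auto
      qed
      have "card G = card M'" unfolding G_def using shq_inj by (rule card_image)
      then have "G \<in> C" using GP shq_tagree[OF tM' i a] cM' unfolding C_def G_def by auto
      then have "p \<le> Psi n z0 G" by (rule minP)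
      moreover have "Psi n z0 G < Psi n z0 M'"
      proof -
        have "Psi n z0 G = (\<Sum>y\<in>M'. card {j. j < n \<and> (shq i (x i) z0 M' y) j \<noteq> z0})"
          unfolding Psi_def G_def by (simp add: sum.reindex[OF shq_inj])
        also have "\<dots> < Psi n z0 M'" unfolding Psi_def
        proof (rule sum_strict_mono_ex1)
          show "finite M'" by (rule finM')
          show "\<forall>y\<in>M'. card {j. j < n \<and> (shq i (x i) z0 M' y) j \<noteq> z0} \<le> card {j. j < n \<and> y j \<noteq> z0}"
            using nz_card_le[of n i "x i" z0 M'] by blast
          show "\<exists>y\<in>M'. card {j. j < n \<and> (shq i (x i) z0 M' y) j \<noteq> z0} < card {j. j < n \<and> y j \<noteq> z0}"
            using nz_card_less[OF i refl a nM] x by blast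
        qed
        finally show ?thesis .
      qed
      ultimately show False using M' by simp
    qed
  qed
  show ?thesis using M'P tM' cM' dc unfolding P_def by blast
qed

lemma zeroing:
  assumes dc: "downc n z0 M" and x: "x \<in> M"
  shows "(\<lambda>j. if j < k \<and> j < n \<and> Q j then z0 else x j) \<in> M"
proof (induction k)
  case 0 then show ?case using x by simp
next
  case (Suc k)
  define g where "g = (\<lambda>j. if j < k \<and> j < n \<and> Q j then z0 else x j)"
  have e: "(\<lambda>j. if j < Suc k \<and> j < n \<and> Q j then z0 else x j) = (if k < n \<and> Q k then g(k:=z0) else g)"
    unfolding g_def by (auto simp: less_Suc_eq)
  show ?case
  proof (cases "k < n \<and> Q k")
    case True
    show ?thesis unfolding e if_P[OF True] using Suc.IH dc True unfolding downc_def g_def by blast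
  next
    case False
    show ?thesis unfolding e if_not_P[OF False] using Suc.IH unfolding g_def by simp
  qed
qed

definition Zs :: "nat \<Rightarrow> 'a \<Rightarrow> (nat \<Rightarrow> 'a) \<Rightarrow> nat set" where
  "Zs n z0 x = {j. j < n \<and> x j = z0}"

lemma prod_if_const:
  assumes "finite A"
  shows "(\<Prod>j\<in>A. if j \<in> Z then 1 else (c::nat)) = c ^ card (A - Z)"
proof -
  have "(\<Prod>j\<in>A. if j \<in> Z then 1 else c) = (\<Prod>j\<in>A \<inter> Z. if j \<in> Z then 1 else c) * (\<Prod>j\<in>A - Z. if j \<in> Z then 1 else c)"
    using assms by (rule prod.Int_Diff)
  also have "\<dots> = (\<Prod>j\<in>A \<inter> Z. 1) * (\<Prod>j\<in>A - Z. c)"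
    by (intro arg_cong2[where f="(*)"] prod.cong) auto
  also have "\<dots> = c ^ card (A - Z)" by simp
  finally show ?thesis .
qed

lemma fiber_card:
  assumes fin: "finite S" and z0: "z0 \<in> S" and Z: "Z \<subseteq> {0..<n}"
  shows "card {x \<in> PiE {0..<n} (\<lambda>_. S). Zs n z0 x = Z} = (card S - 1) ^ (n - card Z)"
proof -
  define B where "B = (\<lambda>j. if j \<in> Z then {z0} else S - {z0})"
  have e: "{x \<in> PiE {0..<n} (\<lambda>_. S). Zs n z0 x = Z} = PiE {0..<n} B"
  proof
    show "{x \<in> PiE {0..<n} (\<lambda>_. S). Zs n z0 x = Z} \<subseteq> PiE {0..<n} B"
    proof
      fix x assume "x \<in> {x \<in> PiE {0..<n} (\<lambda>_. S). Zs n z0 x = Z}"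
      then have x: "x \<in> PiE {0..<n} (\<lambda>_. S)" "Zs n z0 x = Z" by auto
      show "x \<in> PiE {0..<n} B"
        unfolding PiE_iff
      proof (intro conjI ballI)
        fix j assume j: "j \<in> {0..<n}"
        show "x j \<in> B j"
        proof (cases "j \<in> Z")
          case True
          then show ?thesis using x(2) unfolding B_def Zs_def by auto
        next
          case False
          then have "x j \<noteq> z0" using x(2) j unfolding Zs_def by auto
          then show ?thesis using x(1) j False unfolding B_def PiE_iff by auto
        qed
      next
        show "x \<in> extensional {0..<n}" using x(1) by (simp add: PiE_iff)
      qed
    qed
  next
    show "PiE {0..<n} B \<subseteq> {x \<in> PiE {0..<n} (\<lambda>_. S). Zs n z0 x = Z}"
    proof
      fix x assume x: "x \<in> PiE {0..<n} B"
      have "x \<in> PiE {0..<n} (\<lambda>_. S)"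
        using x z0 unfolding PiE_iff B_def by (auto split: if_splits)
      moreover have "Zs n z0 x = Z"
      proof -
        have xj: "x j \<in> B j" if "j < n" for j using x that unfolding PiE_iff by auto
        have "j \<in> Zs n z0 x \<longleftrightarrow> j \<in> Z" for j
        proof (cases "j < n")
          case True
          then show ?thesis using xj[OF True] unfolding Zs_def B_def by (cases "j \<in> Z") auto
        next
          case False
          then show ?thesis using Z unfolding Zs_def by auto
        qed
        then show ?thesis by blast
      qed
      ultimately show "x \<in> {x \<in> PiE {0..<n} (\<lambda>_. S). Zs n z0 x = Z}" by simp
    qed
  qed
  have "card (PiE {0..<n} B) = (\<Prod>j\<in>{0..<n}. card (B j))" by (rule card_PiE) simp
  also have "\<dots> = (\<Prod>j\<in>{0..<n}. if j \<in> Z then 1 else card S - 1)"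
    unfolding B_def using fin z0 by (intro prod.cong) auto
  also have "\<dots> = (card S - 1) ^ card ({0..<n} - Z)" by (rule prod_if_const) simp
  also have "card ({0..<n} - Z) = n - card Z" using Z by (simp add: card_Diff_subset finite_subset)
  finally show ?thesis unfolding e .
qed

lemma qary_bound:
  assumes fin: "finite S" and z0: "z0 \<in> S" and q: "2 \<le> card S"
    and MP: "M \<subseteq> PiE {0..<n} (\<lambda>_. S)" and tM: "tagree n t M"
  shows "card M * (card S - 1)^t \<le> card S ^ n"
proof -
  obtain M' where M': "M' \<subseteq> PiE {0..<n} (\<lambda>_. S)" "tagree n t M'" "card M' = card M" "downc n z0 M'"
    using qextremal[OF fin z0 MP tM] by blast
  define F where "F = Zs n z0 ` M'"
  have FP: "F \<subseteq> Pow {0..<n}" unfolding F_def Zs_def by auto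
  have finF: "finite F" using FP by (rule finite_subset) auto
  have tF: "tint t F"
    unfolding tint_def
  proof (intro ballI)
    fix A B assume "A \<in> F" "B \<in> F"
    then obtain x x' where xx: "x \<in> M'" "x' \<in> M'" "A = Zs n z0 x" "B = Zs n z0 x'" unfolding F_def by auto
    define y where "y = (\<lambda>j. if j < n \<and> j < n \<and> x j \<noteq> z0 then z0 else x' j)"
    have yM: "y \<in> M'" unfolding y_def by (rule zeroing[OF M'(4) xx(2)])
    have "{j. j < n \<and> x j = y j} = A \<inter> B" unfolding xx(3,4) Zs_def y_def by auto
    then have "agree n x y = card (A \<inter> B)" unfolding agree_def by simp
    then show "t \<le> card (A \<inter> B)" using M'(2) xx(1) yM unfolding tagree_def by metis
  qed
  have "card M' \<le> Wt (card S) n F"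
  proof -
    have "M' \<subseteq> (\<Union>Z\<in>F. {x \<in> PiE {0..<n} (\<lambda>_. S). Zs n z0 x = Z})" using M'(1) unfolding F_def by auto
    then have "card M' \<le> card (\<Union>Z\<in>F. {x \<in> PiE {0..<n} (\<lambda>_. S). Zs n z0 x = Z})"
      using fin finF by (intro card_mono) (auto simp: finite_PiE)
    also have "\<dots> \<le> (\<Sum>Z\<in>F. card {x \<in> PiE {0..<n} (\<lambda>_. S). Zs n z0 x = Z})"
      by (rule card_UN_le[OF finF])
    also have "\<dots> = Wt (card S) n F" unfolding Wt_def
      using fiber_card[OF fin z0] FP by (intro sum.cong) auto
    finally show ?thesis .
  qed
  then have "card M * (card S - 1)^t \<le> Wt (card S) n F * (card S - 1)^t" using M'(3) by simp
  also have "\<dots> \<le> card S ^ n" by (rule binary_bound[OF FP tF q])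
  finally show ?thesis .
qed

definition vec :: "nat \<Rightarrow> nat set \<Rightarrow> bool list" where
  "vec b T = map (\<lambda>j. j \<in> T) [0..<b]"

lemma length_vec [simp]: "length (vec b T) = b" unfolding vec_def by simp

lemma ip_vec: assumes "length u = b"
  shows "ip u (vec b T) = odd (card {j. j < b \<and> u ! j \<and> j \<in> T})"
proof -
  have "map2 (\<and>) u (vec b T) = map (\<lambda>j. u ! j \<and> j \<in> T) [0..<b]"
    using assms by (intro nth_equalityI) (auto simp: vec_def)
  then show ?thesis unfolding ip_def by (simp add: filter_map comp_def len_filter_upt)
qed

lemma ip_vec0: "length u = b \<Longrightarrow> ip u (vec b {}) = False"
  by (simp add: ip_vec)

lemma ip_vec1: "length u = b \<Longrightarrow> p < b \<Longrightarrow> ip u (vec b {p}) = u ! p"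
proof -
  assume a: "length u = b" "p < b"
  have "{j. j < b \<and> u ! j \<and> j \<in> {p}} = (if u ! p then {p} else {})" using a by auto
  then show ?thesis using a by (simp add: ip_vec)
qed

lemma ip_vec2: "length u = b \<Longrightarrow> p < b \<Longrightarrow> r < b \<Longrightarrow> p \<noteq> r \<Longrightarrow> ip u (vec b {p, r}) = (u ! p \<noteq> u ! r)"
proof -
  assume a: "length u = b" "p < b" "r < b" "p \<noteq> r"
  have "{j. j < b \<and> u ! j \<and> j \<in> {p, r}} = (if u ! p then {p} else {}) \<union> (if u ! r then {r} else {})"
    using a by auto
  then have c: "card {j. j < b \<and> u ! j \<and> j \<in> {p, r}} = (if u ! p then 1 else 0) + (if u ! r then 1 else 0)"
    using a(4) by (cases "u ! p"; cases "u ! r") auto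
  show ?thesis unfolding ip_vec[OF a(1)] c by (cases "u ! p"; cases "u ! r") auto
qed

lemma nonzero_idx: "length u = b \<Longrightarrow> u \<noteq> replicate b False \<Longrightarrow> \<exists>p<b. u ! p"
  by (metis (full_types) in_set_conv_nth replicate_eqI)

lemma block:
  assumes u: "length u = b" "u \<noteq> replicate b False" and u': "length u' = b" "u' \<noteq> replicate b False"
    and ab: "u = u' \<longrightarrow> \<alpha> = \<beta>"
  shows "\<exists>v. length v = b \<and> ip u v = \<alpha> \<and> ip u' v = \<beta>"
proof (cases "u = u'")
  case True
  obtain p where p: "p < b" "u ! p" using nonzero_idx[OF u] by blast
  show ?thesis
  proof (cases \<alpha>)
    case True
    then show ?thesis using p u ab \<open>u = u'\<close> by (intro exI[of _ "vec b {p}"]) (simp add: ip_vec1)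
  next
    case False
    then show ?thesis using p u ab \<open>u = u'\<close> by (intro exI[of _ "vec b {}"]) (simp add: ip_vec0)
  qed
next
  case False
  then obtain r where r: "r < b" "u ! r \<noteq> u' ! r" using u u' by (metis nth_equalityI)
  show ?thesis
  proof (cases "u ! r")
    case True
    then have u'r: "\<not> u' ! r" using r by simp
    obtain p where p: "p < b" "u' ! p" using nonzero_idx[OF u'] by blast
    have pr: "p \<noteq> r" using p u'r by auto
    have v1: "ip u (vec b {r}) = True" "ip u' (vec b {r}) = False" using r True u'r u u' by (simp_all add: ip_vec1)
    have v2: "ip u (vec b {p}) = u ! p" "ip u' (vec b {p}) = True" using p u u' by (simp_all add: ip_vec1)
    have v3: "ip u (vec b {p, r}) = (\<not> u ! p)" "ip u' (vec b {p, r}) = True"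
      using p r pr True u'r u u' by (simp_all add: ip_vec2)
    have v0: "ip u (vec b {}) = False" "ip u' (vec b {}) = False" using u u' by (simp_all add: ip_vec0)
    show ?thesis
    proof (cases \<beta>)
      case False
      show ?thesis
      proof (cases \<alpha>)
        case True then show ?thesis using False by (intro exI[of _ "vec b {r}"]) (simp add: v1)
      next
        case f2: False then show ?thesis using False by (intro exI[of _ "vec b {}"]) (simp add: v0)
      qed
    next
      case True
      show ?thesis
      proof (cases "\<alpha> = u ! p")
        case True
        then show ?thesis using \<open>\<beta>\<close> by (intro exI[of _ "vec b {p}"]) (simp add: v2)
      next
        case False
        then show ?thesis using \<open>\<beta>\<close> by (intro exI[of _ "vec b {p, r}"]) (simp add: v3)
      qed
    qed
  next
    case False
    then have u'r: "u' ! r" using r by simp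
    obtain p where p: "p < b" "u ! p" using nonzero_idx[OF u] by blast
    have pr: "p \<noteq> r" using p False by auto
    have v1: "ip u (vec b {r}) = False" "ip u' (vec b {r}) = True" using r False u'r u u' by (simp_all add: ip_vec1)
    have v2: "ip u (vec b {p}) = True" "ip u' (vec b {p}) = u' ! p" using p u u' by (simp_all add: ip_vec1)
    have v3: "ip u (vec b {p, r}) = True" "ip u' (vec b {p, r}) = (\<not> u' ! p)"
      using p r pr False u'r u u' by (simp_all add: ip_vec2)
    have v0: "ip u (vec b {}) = False" "ip u' (vec b {}) = False" using u u' by (simp_all add: ip_vec0)
    show ?thesis
    proof (cases \<alpha>)
      case False
      show ?thesis
      proof (cases \<beta>)
        case True then show ?thesis using False by (intro exI[of _ "vec b {r}"]) (simp add: v1)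
      next
        case f2: False then show ?thesis using False by (intro exI[of _ "vec b {}"]) (simp add: v0)
      qed
    next
      case True
      show ?thesis
      proof (cases "\<beta> = u' ! p")
        case True
        then show ?thesis using \<open>\<alpha>\<close> by (intro exI[of _ "vec b {p}"]) (simp add: v2)
      next
        case False
        then show ?thesis using \<open>\<alpha>\<close> by (intro exI[of _ "vec b {p, r}"]) (simp add: v3)
      qed
    qed
  qed
qed

lemma card_bool_lists: "card {w::bool list. length w = n} = 2^n"
proof -
  have "{w::bool list. length w = n} = {w. set w \<subseteq> UNIV \<and> length w = n}" by auto
  then show ?thesis using card_lists_length_eq[of "UNIV::bool set" n] by simp
qed

lemma fin_bool_lists_le: "finite {w::bool list. length w \<le> k}"
proof -
  have "{w::bool list. length w \<le> k} = {w. set w \<subseteq> UNIV \<and> length w \<le> k}" by auto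
  then show ?thesis using finite_lists_length_le[of "UNIV::bool set" k] by simp
qed

lemma card_msgs: "card {w::bool list. length w \<le> k} < 2^(Suc k)"
proof (induction k)
  case 0
  have "{w::bool list. length w \<le> 0} = {[]}" by auto
  then show ?case by simp
next
  case (Suc k)
  have "{w::bool list. length w \<le> Suc k} = {w. length w \<le> k} \<union> {w. length w = Suc k}" by auto
  then have "card {w::bool list. length w \<le> Suc k} \<le> card {w::bool list. length w \<le> k} + card {w::bool list. length w = Suc k}"
    by (metis card_Un_le)
  then show ?case using Suc.IH card_bool_lists[of "Suc k"] by simp
qed

definition Sg :: "nat \<Rightarrow> bool list set" where
  "Sg b = {u. length u = b \<and> u \<noteq> replicate b False}"

lemma Sg_fin: "finite (Sg b)"
proof -
  have "Sg b \<subseteq> {w. set w \<subseteq> UNIV \<and> length w = b}" unfolding Sg_def by auto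
  then show ?thesis using finite_lists_length_eq[of "UNIV::bool set" b] by (auto intro: finite_subset)
qed

lemma Sg_card: "card (Sg b) = 2^b - 1"
proof -
  have e: "Sg b = {w::bool list. length w = b} - {replicate b False}" unfolding Sg_def by auto
  have fin: "finite {w::bool list. length w = b}"
    using finite_lists_length_eq[of "UNIV::bool set" b] by simp
  show ?thesis unfolding e using card_bool_lists[of b] fin by (simp add: card_Diff_singleton)
qed

lemma concat_inj:
  "\<forall>x'. length x = length x' \<and> (\<forall>u\<in>set x. length u = b) \<and> (\<forall>u\<in>set x'. length u = b) \<and> concat x = concat x' \<longrightarrow> x = x'"
proof (induction x)
  case Nil then show ?case by simp
next
  case (Cons u x)
  show ?case
  proof (intro allI impI)
    fix x' assume a: "length (u # x) = length x' \<and> (\<forall>u\<in>set (u # x). length u = b) \<and> (\<forall>u\<in>set x'. length u = b) \<and> concat (u # x) = concat x'"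
    then obtain u' y where x': "x' = u' # y" by (cases x') auto
    have "u @ concat x = u' @ concat y" using a x' by simp
    moreover have "length u = length u'" using a x' by simp
    ultimately have "u = u'" "concat x = concat y" by simp_all
    then show "u # x = x'" using Cons.IH a x' by simp
  qed
qed

lemma protocol_exists: "oneway_protocol n b S f (n * b)"
proof -
  define dec where "dec w = (SOME x. x \<in> blocks n b \<and> concat x = w)" for w :: "bool list"
  have dec: "dec (concat x) = x" if "x \<in> blocks n b" for x
  proof -
    have "\<exists>x'. x' \<in> blocks n b \<and> concat x' = concat x" using that by blast
    then have "dec (concat x) \<in> blocks n b \<and> concat (dec (concat x)) = concat x"
      unfolding dec_def by (rule someI_ex)
    then show ?thesis using concat_inj[of "dec (concat x)" b] that unfolding blocks_def by auto
  qed
  have len: "length (concat x) \<le> n * b" if "x \<in> blocks n b" for x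
  proof -
    have "map length x = replicate n b" using that unfolding blocks_def
      by (intro nth_equalityI) auto
    then show ?thesis by (simp add: length_concat sum_list_replicate)
  qed
  show ?thesis unfolding oneway_protocol_def
    by (rule exI[of _ concat], rule exI[of _ "\<lambda>w y. f (map2 ip (dec w) y)"])
       (auto simp: len dec comp_dom_def)
qed

lemma agree_claim:
  assumes S: "S \<subseteq> {x. length x = n}"
    and prot: "\<forall>(x, y)\<in>comp_dom n b S. g (m x) y = f (map2 ip x y)"
    and v: "v \<in> PiE {0..<n} (\<lambda>_. Sg b)" and v': "v' \<in> PiE {0..<n} (\<lambda>_. Sg b)"
    and mv: "m (map v [0..<n]) = m (map v' [0..<n])"
  shows "D_dt_nonadaptive n S f \<le> agree n v v'"
proof -
  define A where "A = {j. j < n \<and> v j = v' j}"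
  have vS: "v i \<in> Sg b" "v' i \<in> Sg b" if "i < n" for i using v v' that by auto
  have blk: "map w [0..<n] \<in> blocks n b" if "w \<in> PiE {0..<n} (\<lambda>_. Sg b)" for w
    using that unfolding blocks_def Sg_def by (auto simp: in_set_conv_nth)
  have key: "f z = f z'" if z: "z \<in> S" "z' \<in> S" "\<forall>i\<in>A. z ! i = z' ! i" for z z'
  proof -
    define P where "P i y = (length y = b \<and> ip (v i) y = z ! i \<and> ip (v' i) y = z' ! i)" for i y
    have exP: "\<exists>y. P i y" if "i < n" for i
      unfolding P_def using block[of "v i" b "v' i" "z ! i" "z' ! i"] vS[OF that] z(3) that
      unfolding Sg_def A_def by auto
    define Y where "Y = map (\<lambda>i. SOME y. P i y) [0..<n]"
    have PY: "P i (Y ! i)" if "i < n" for i unfolding Y_def using that exP[OF that]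
      by (simp add: someI_ex)
    have Yb: "Y \<in> blocks n b" unfolding blocks_def
    proof (intro CollectI conjI ballI)
      show "length Y = n" unfolding Y_def by simp
      fix u assume "u \<in> set Y"
      then obtain i where "i < n" "u = Y ! i" unfolding Y_def by (auto simp: in_set_conv_nth)
      then show "length u = b" using PY unfolding P_def by auto
    qed
    have lz: "length z = n" "length z' = n" using z S by auto
    have e1: "map2 ip (map v [0..<n]) Y = z"
      using lz PY Yb unfolding P_def blocks_def by (intro nth_equalityI) auto
    have e2: "map2 ip (map v' [0..<n]) Y = z'"
      using lz PY Yb unfolding P_def blocks_def by (intro nth_equalityI) auto
    have "(map v [0..<n], Y) \<in> comp_dom n b S" unfolding comp_dom_def using blk[OF v] Yb e1 z by auto
    then have "g (m (map v [0..<n])) Y = f z" using prot e1 by fastforce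
    moreover have "(map v' [0..<n], Y) \<in> comp_dom n b S" unfolding comp_dom_def using blk[OF v'] Yb e2 z by auto
    then have "g (m (map v' [0..<n])) Y = f z'" using prot e2 by fastforce
    ultimately show ?thesis using mv by simp
  qed
  have finA: "finite A" unfolding A_def by simp
  have "nonadaptive_dt n S f (card A)"
    unfolding nonadaptive_dt_def
  proof (intro exI[of _ "sorted_list_of_set A"] conjI allI)
    show "length (sorted_list_of_set A) = card A" by simp
    show "\<forall>i\<in>set (sorted_list_of_set A). i < n" using finA unfolding A_def by simp
    fix a :: "nat \<Rightarrow> bool"
    show "\<exists>c. \<forall>x\<in>S. (\<forall>i\<in>set (sorted_list_of_set A). x ! i = a i) \<longrightarrow> f x = c"
    proof (cases "\<exists>z\<in>S. \<forall>i\<in>A. z ! i = a i")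
      case True
      then obtain z where z: "z \<in> S" "\<forall>i\<in>A. z ! i = a i" by blast
      show ?thesis using key[OF z(1)] z(2) finA by (intro exI[of _ "f z"]) auto
    next
      case False
      then show ?thesis using finA by auto
    qed
  qed
  then have "D_dt_nonadaptive n S f \<le> card A" unfolding D_dt_nonadaptive_def by (rule Least_le)
  then show ?thesis unfolding agree_def A_def .
qed

theorem theorem1p2:
  shows "\<exists>c::real. c > 0 \<and>
    (\<forall>(n::nat) (S::bool list set) (f::bool list \<Rightarrow> bool) (b::nat).
       S \<subseteq> {x. length x = n} \<longrightarrow> b \<ge> 2 \<longrightarrow>
       real (D_cc_oneway n b S f) \<ge> c * real b * real (D_dt_nonadaptive n S f))"
proof (intro exI[of _ "1/2"] conjI allI impI)
  show "(0::real) < 1/2" by simp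
  fix n S f b assume S: "S \<subseteq> {x::bool list. length x = n}" and b: "2 \<le> (b::nat)"
  define k where "k = D_cc_oneway n b S f"
  define d where "d = D_dt_nonadaptive n S f"
  have "oneway_protocol n b S f k" unfolding k_def D_cc_oneway_def
    by (rule LeastI_ex) (use protocol_exists in blast)
  then obtain m :: "bool list list \<Rightarrow> bool list" and g :: "bool list \<Rightarrow> bool list list \<Rightarrow> bool" where mlen: "\<forall>x\<in>blocks n b. length (m x) \<le> k"
    and prot: "\<forall>(x, y)\<in>comp_dom n b S. g (m x) y = f (map2 ip x y)"
    unfolding oneway_protocol_def by blast
  define q where "q = card (Sg b)"
  have q: "q = 2^b - 1" unfolding q_def by (rule Sg_card)
  have b4: "4 \<le> (2::nat)^b" using power_increasing[OF b, of "2::nat"] by simp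
  have q3: "3 \<le> q" using q b4 by simp
  define P where "P = PiE {0..<n} (\<lambda>_. Sg b)"
  have cardP: "card P = q^n" unfolding P_def q_def by (simp add: card_PiE)
  have finP: "finite P" unfolding P_def using Sg_fin by (simp add: finite_PiE)
  define z0 where "z0 = replicate (b-1) False @ [True]"
  have z0S: "z0 \<in> Sg b"
  proof -
    have l: "length z0 = b" unfolding z0_def using b by simp
    have "True \<in> set z0" unfolding z0_def by simp
    moreover have "True \<notin> set (replicate b False)" by simp
    ultimately have "z0 \<noteq> replicate b False" by metis
    then show ?thesis using l unfolding Sg_def by simp
  qed
  define msgs where "msgs = {w::bool list. length w \<le> k}"
  have finmsgs: "finite msgs" unfolding msgs_def by (rule fin_bool_lists_le)
  have blk: "map v [0..<n] \<in> blocks n b" if "v \<in> P" for v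
    using that unfolding P_def blocks_def Sg_def by (auto simp: in_set_conv_nth)
  define Mw where "Mw w = {v\<in>P. m (map v [0..<n]) = w}" for w
  have "[] \<in> msgs" unfolding msgs_def by simp
  define mx where "mx = Max ((\<lambda>w. card (Mw w)) ` msgs)"
  have "mx \<in> (\<lambda>w. card (Mw w)) ` msgs" unfolding mx_def using finmsgs \<open>[] \<in> msgs\<close> by (intro Max_in) auto
  then obtain w0 where w0: "w0 \<in> msgs" "card (Mw w0) = mx" by auto
  have mxge: "card (Mw w) \<le> mx" if "w \<in> msgs" for w unfolding mx_def using finmsgs that by (intro Max_ge) auto
  have "P \<subseteq> (\<Union>w\<in>msgs. Mw w)" unfolding Mw_def msgs_def using mlen blk by auto
  then have "card P \<le> card (\<Union>w\<in>msgs. Mw w)" using finP finmsgs unfolding Mw_def by (intro card_mono) auto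
  also have "\<dots> \<le> (\<Sum>w\<in>msgs. card (Mw w))" by (rule card_UN_le[OF finmsgs])
  also have "\<dots> \<le> card msgs * mx" using sum_bounded_above[of msgs "\<lambda>w. card (Mw w)" mx] mxge by simp
  finally have c1: "q^n \<le> card msgs * card (Mw w0)" using cardP w0 by simp
  have tM: "tagree n d (Mw w0)" unfolding tagree_def d_def
  proof (intro ballI)
    fix v v' assume "v \<in> Mw w0" "v' \<in> Mw w0"
    then show "D_dt_nonadaptive n S f \<le> agree n v v'"
      using agree_claim[of S n b g m f v v', OF S prot] unfolding Mw_def P_def by auto
  qed
  have MP: "Mw w0 \<subseteq> PiE {0..<n} (\<lambda>_. Sg b)" unfolding Mw_def P_def by auto
  have c2: "card (Mw w0) * (q-1)^d \<le> q^n"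
    using qary_bound[OF Sg_fin z0S _ MP tM] q3 unfolding q_def by simp
  have pos: "0 < card (Mw w0)"
  proof (rule ccontr)
    assume "\<not> 0 < card (Mw w0)"
    then have "q^n \<le> 0" using c1 by simp
    moreover have "0 < q^n" using q3 by simp
    ultimately show False by simp
  qed
  have "card (Mw w0) * (q-1)^d \<le> card (Mw w0) * card msgs"
    using le_trans[OF c2 c1] by (simp only: mult.commute)
  then have "(q-1)^d \<le> card msgs" using pos by simp
  also have "\<dots> < 2^(Suc k)" unfolding msgs_def by (rule card_msgs)
  finally have c3: "(q-1)^d < 2^(Suc k)" .
  have "2^(b-1) \<le> q - 1"
  proof -
    obtain c where bc: "b = Suc c" using b by (cases b) auto
    have c1: "1 \<le> c" using b bc by simp
    have "(2::nat)^1 \<le> 2^c" using power_increasing[OF c1, of "2::nat"] by simp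
    then show ?thesis using q bc by simp
  qed
  then have "(2::nat)^((b-1)*d) \<le> (q-1)^d" by (simp add: power_mult power_mono)
  then have "(2::nat)^((b-1)*d) < 2^(Suc k)" using c3 by simp
  then have "(b-1)*d < Suc k" using power_strict_increasing_iff[of "2::nat" "(b-1)*d" "Suc k"] by linarith
  then have h1: "(b-1)*d \<le> k" by simp
  have "1 \<le> b - 1" using b by linarith
  then have h2: "d \<le> (b-1)*d" using mult_le_mono1[of 1 "b-1" d] by simp
  have h3: "b*d = d + (b-1)*d" using b by (cases b) auto
  have "b * d \<le> 2 * k" using h1 h2 h3 by linarith
  then have "real b * real d \<le> 2 * real k" by (metis of_nat_le_iff of_nat_mult of_nat_numeral)
  then show "1/2 * real b * real (D_dt_nonadaptive n S f) \<le> real (D_cc_oneway n b S f)"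
    unfolding k_def d_def by simp
qed

end
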